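(* Let $\mathcal{C}$ be an $[n,k,d]$ linear code over $\mathbb{F}_{q^m}$, $\mathcal{B}$ a basis of $\mathbb{F}_{q^m}$ over $\mathbb{F}_q$, and $u=(i_1,\dots,i_n)\in\{1,\dots,m\}^n$. Then $S_u(\mathcal{C})$ is an $[n,k',d']$ linear code over $\mathbb{F}_q$ with $k'\ge n-m(n-k)$ and $d'\ge d$. Moreover, any decoding algorithm for $\mathcal{C}$ correcting up to $t$ errors can be applied to $S_u(\mathcal{C})$ with the same error-correction capability: if $y\in\mathbb{F}_q^n$ differs from $c\in S_u(\mathcal{C})$ in at most $t$ positions, then inserting zeros at the positions $J_u$ of $y$ and of $c$ and applying $\Phi_{\mathcal{B}}^{-1}$ yields a word of $\mathbb{F}_{q^m}^n$ at Hamming distance at most $t$ from the codeword $\Phi_{\mathcal{B}}^{-1}$(c with zeros inserted) $\in\mathcal{C}$, from which $c$ is recovered.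
   Context: $\phi_{\mathcal{B}}(\sum_ix_ib_i)=(x_1,\dots,x_m)$, $\Phi_{\mathcal{B}}(c_1,\dots,c_n)=(\phi_{\mathcal{B}}(c_1),\dots,\phi_{\mathcal{B}}(c_n))\in\mathbb{F}_q^{nm}$, and $Im_q(\mathcal{C})=\Phi_{\mathcal{B}}(\mathcal{C})$, with positions numbered $1,\dots,nm$. Set $I_u=\{i_1,\ i_2+m,\ i_3+2m,\dots,\ i_n+(n-1)m\}$ and $J_u=\{1,\dots,nm\}\setminus I_u$. For $D\subseteq\mathbb{F}_q^{N}$ and $J\subseteq\{1,\dots,N\}$, $Short_J(D)=\{(x_j)_{j\notin J}:x\in D,\ x_j=0\ \forall j\in J\}$. Define $S_u(\mathcal{C})=Short_{J_u}(Im_q(\mathcal{C}))$. *)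

theory Defs
  imports "HOL-Analysis.Analysis"
begin

text \<open>Words of length n over a field F are vectors of type F^'n (n = CARD('n)).
  F_q is the finite field type 'a, F_{q^m} is the finite field type 'b, and
  F_q sits inside F_{q^m} via a field embedding emb :: 'a => 'b.
  A basis of F_{q^m} over F_q is a family b :: 'm => 'b (m = CARD('m)).\<close>

definition hamming :: "'f::zero ^ 'n \<Rightarrow> 'f ^ 'n \<Rightarrow> nat" where
  "hamming x y = card {i. x $ i \<noteq> y $ i}"

definition min_dist :: "('f::zero ^ 'n) set \<Rightarrow> nat" where
  "min_dist C = Min {hamming x y | x y. x \<in> C \<and> y \<in> C \<and> x \<noteq> y}"

definition is_basis :: "('a::field \<Rightarrow> 'b::field) \<Rightarrow> ('m::finite \<Rightarrow> 'b) \<Rightarrow> bool" where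
  "is_basis emb b \<longleftrightarrow> (\<forall>x. \<exists>!c::'a^'m. x = (\<Sum>i\<in>UNIV. emb (c $ i) * b i))"

definition phiB :: "('a::field \<Rightarrow> 'b::field) \<Rightarrow> ('m::finite \<Rightarrow> 'b) \<Rightarrow> 'b \<Rightarrow> 'a^'m" where
  "phiB emb b x = (THE c. x = (\<Sum>i\<in>UNIV. emb (c $ i) * b i))"

text \<open>Phi_B applied coordinatewise; the image in F_q^{nm} is indexed by pairs (j,i),
  pair (j,i) standing for position i + (j-1) m.\<close>
definition PhiB :: "('a::field \<Rightarrow> 'b::field) \<Rightarrow> ('m::finite \<Rightarrow> 'b) \<Rightarrow> 'b^'n \<Rightarrow> ('a^'m)^'n" where
  "PhiB emb b c = (\<chi> j. phiB emb b (c $ j))"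

definition PhiB_inv :: "('a::field \<Rightarrow> 'b::field) \<Rightarrow> ('m::finite \<Rightarrow> 'b) \<Rightarrow> ('a^'m)^'n \<Rightarrow> 'b^'n" where
  "PhiB_inv emb b w = (\<chi> j. (\<Sum>i\<in>UNIV. emb (w $ j $ i) * b i))"

definition Im_q :: "('a::field \<Rightarrow> 'b::field) \<Rightarrow> ('m::finite \<Rightarrow> 'b) \<Rightarrow> ('b^'n) set \<Rightarrow> (('a^'m)^'n) set" where
  "Im_q emb b C = PhiB emb b ` C"

text \<open>Shortening on J_u = all positions (j,i) with i \<noteq> u j: keep the words vanishing
  on J_u and delete the J_u coordinates. The remaining positions I_u, in increasing
  order, are (1,u 1), ..., (n,u n), so the j-th coordinate of the result is x at (j, u j).\<close>
definition Short_u :: "('n \<Rightarrow> 'm) \<Rightarrow> (('a::zero^'m)^'n) set \<Rightarrow> ('a^'n) set" where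
  "Short_u u D = {(\<chi> j. x $ j $ u j) | x. x \<in> D \<and> (\<forall>j i. i \<noteq> u j \<longrightarrow> x $ j $ i = 0)}"

definition S_u :: "('a::field \<Rightarrow> 'b::field) \<Rightarrow> ('m::finite \<Rightarrow> 'b) \<Rightarrow> ('n \<Rightarrow> 'm) \<Rightarrow> ('b^'n) set \<Rightarrow> ('a^'n) set" where
  "S_u emb b u C = Short_u u (Im_q emb b C)"

definition ins_zeros :: "('n \<Rightarrow> 'm) \<Rightarrow> 'a::zero^'n \<Rightarrow> ('a^'m)^'n" where
  "ins_zeros u y = (\<chi> j. \<chi> i. if i = u j then y $ j else 0)"

end

theory Submission
  imports Defs "HOL-Library.FuncSet"
begin

lemma card_subspace_vec:
  fixes S :: "('f::{field,finite}^'n) set"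
  assumes "vec.subspace S"
  shows "card S = CARD('f) ^ vec.dim S"
proof -
  obtain B where B: "B \<subseteq> S" "vec.independent B" "S \<subseteq> vec.span B" "card B = vec.dim S"
    using vec.basis_exists by blast
  have fin: "finite B" by (rule finite_subset[OF subset_UNIV]) simp
  have span: "vec.span B = S" using vec.span_subspace[OF B(1) B(3) assms] .
  define h where "h f = (\<Sum>v\<in>B. f v *s v)" for f :: "'f^'n \<Rightarrow> 'f"
  have "bij_betw h (B \<rightarrow>\<^sub>E UNIV) S"
    unfolding bij_betw_def
  proof
    show "inj_on h (B \<rightarrow>\<^sub>E UNIV)"
    proof (rule inj_onI)
      fix f g assume f: "f \<in> B \<rightarrow>\<^sub>E UNIV" and g: "g \<in> B \<rightarrow>\<^sub>E UNIV" and eq: "h f = h g"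
      have "(\<Sum>v\<in>B. f v *s v - g v *s v) = 0"
        using eq by (simp add: h_def sum_subtractf)
      hence s0: "(\<Sum>v\<in>B. (\<lambda>v. f v - g v) v *s v) = 0"
        by (simp add: vec.scale_left_diff_distrib)
      from B(2) have ind: "\<forall>c. (\<Sum>v\<in>B. c v *s v) = 0 \<longrightarrow> (\<forall>v\<in>B. c v = 0)"
        unfolding vec.independent_explicit by blast
      have "\<forall>v\<in>B. f v - g v = 0" using ind[rule_format, of "\<lambda>v. f v - g v", OF s0] by simp
      thus "f = g" using f g by (intro PiE_ext) auto
    qed
    show "h ` (B \<rightarrow>\<^sub>E UNIV) = S"
    proof
      have "\<And>f. h f \<in> vec.span B" unfolding h_def
        by (intro vec.span_sum vec.span_scale vec.span_base)
      thus "h ` (B \<rightarrow>\<^sub>E UNIV) \<subseteq> S" using span by auto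
      show "S \<subseteq> h ` (B \<rightarrow>\<^sub>E UNIV)"
      proof
        fix x assume "x \<in> S"
        then obtain f where x: "x = (\<Sum>v\<in>B. f v *s v)"
          using span vec.span_finite[OF fin] by auto
        have "x = h (restrict f B)" unfolding x h_def by (rule sum.cong) auto
        thus "x \<in> h ` (B \<rightarrow>\<^sub>E UNIV)" by auto
      qed
    qed
  qed
  hence "card S = card (B \<rightarrow>\<^sub>E (UNIV::'f set))" by (simp add: bij_betw_same_card)
  also have "\<dots> = CARD('f) ^ card B" by (rule card_funcsetE[OF fin])
  finally show ?thesis using B(4) by simp
qed

theorem proposition4:
  fixes emb :: "'a::{finite,field} \<Rightarrow> 'b::{finite,field}"
    and b :: "'m::finite \<Rightarrow> 'b"
    and u :: "'n::finite \<Rightarrow> 'm"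
    and C :: "('b^'n) set"
    and k d t :: nat
  assumes emb_one: "emb 1 = 1"
    and emb_add: "\<And>x y. emb (x + y) = emb x + emb y"
    and emb_mult: "\<And>x y. emb (x * y) = emb x * emb y"
    and basis: "is_basis emb b"
    and lin: "vec.subspace C"
    and dimC: "vec.dim C = k"
    and distC: "d = min_dist C"
  shows "vec.subspace (S_u emb b u C)
    \<and> int (vec.dim (S_u emb b u C)) \<ge> int CARD('n) - int CARD('m) * (int CARD('n) - int k)
    \<and> (\<forall>x\<in>S_u emb b u C. \<forall>y\<in>S_u emb b u C. x \<noteq> y \<longrightarrow> hamming x y \<ge> d)
    \<and> (\<forall>c\<in>S_u emb b u C. \<forall>y::'a^'n. hamming y c \<le> t \<longrightarrow>
          PhiB_inv emb b (ins_zeros u c) \<in> C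
        \<and> hamming (PhiB_inv emb b (ins_zeros u y)) (PhiB_inv emb b (ins_zeros u c)) \<le> t
        \<and> (\<chi> j. PhiB emb b (PhiB_inv emb b (ins_zeros u c)) $ j $ u j) = c)
    \<and> (\<forall>dec :: 'b^'n \<Rightarrow> 'b^'n.
          (\<forall>c\<in>C. \<forall>w. hamming w c \<le> t \<longrightarrow> dec w = c) \<longrightarrow>
          (\<forall>c\<in>S_u emb b u C. \<forall>y. hamming y c \<le> t \<longrightarrow>
              (\<chi> j. PhiB emb b (dec (PhiB_inv emb b (ins_zeros u y))) $ j $ u j) = c))"
proof -
  have ex1: "\<And>x. \<exists>!c::'a^'m. x = (\<Sum>i\<in>UNIV. emb (c $ i) * b i)"
    using basis unfolding is_basis_def by blast
  have phiB_eq: "\<And>x. (\<Sum>i\<in>UNIV. emb (phiB emb b x $ i) * b i) = x"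
  proof -
    fix x
    show "(\<Sum>i\<in>UNIV. emb (phiB emb b x $ i) * b i) = x"
      unfolding phiB_def using theI'[OF ex1[of x]] by (rule sym)
  qed
  have phiB_uniq: "\<And>x c. x = (\<Sum>i\<in>UNIV. emb (c $ i) * b i) \<Longrightarrow> phiB emb b x = c"
    unfolding phiB_def by (rule the1_equality[OF ex1])
  have emb0: "emb 0 = 0"
  proof -
    have "emb 0 + 0 = emb 0 + emb 0" using emb_add[of 0 0] by simp
    thus ?thesis using add_left_cancel by metis
  qed
  have emb_diff: "\<And>x y. emb (x - y) = emb x - emb y"
  proof -
    fix x y
    have "emb x = emb (x - y) + emb y" using emb_add[of "x - y" y] by simp
    thus "emb (x - y) = emb x - emb y" by (simp add: eq_diff_eq)
  qed
  have QP: "\<And>c. PhiB_inv emb b (PhiB emb b c) = c"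
    by (simp add: vec_eq_iff PhiB_inv_def PhiB_def phiB_eq)
  have PQ: "\<And>w. PhiB emb b (PhiB_inv emb b w) = w"
    by (simp add: vec_eq_iff PhiB_inv_def PhiB_def phiB_uniq)
  have Qj: "\<And>w j. PhiB_inv emb b w $ j = (\<Sum>i\<in>UNIV. emb (w$j$i) * b i)"
    by (simp add: PhiB_inv_def)
  have Pj: "\<And>c j. PhiB emb b c $ j = phiB emb b (c $ j)"
    by (simp add: PhiB_def)
  have Q_add: "\<And>w w'. PhiB_inv emb b (w + w') = PhiB_inv emb b w + PhiB_inv emb b w'"
    by (simp add: vec_eq_iff Qj emb_add distrib_right sum.distrib)
  have Q_diff: "\<And>w w'. PhiB_inv emb b (w - w') = PhiB_inv emb b w - PhiB_inv emb b w'"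
    by (simp add: vec_eq_iff Qj emb_diff left_diff_distrib sum_subtractf)
  have Q_scale: "\<And>a w. PhiB_inv emb b (\<chi> j. a *s (w $ j)) = emb a *s PhiB_inv emb b w"
    by (simp add: vec_eq_iff Qj emb_mult sum_distrib_left mult.assoc)
  have Q0: "PhiB_inv emb b 0 = 0"
    by (simp add: vec_eq_iff Qj emb0)
  have P_diff: "\<And>x y. PhiB emb b (x - y) = PhiB emb b x - PhiB emb b y"
    by (metis PQ QP Q_diff)
  have ins_add: "\<And>s s' :: 'a^'n. ins_zeros u (s + s') = ins_zeros u s + ins_zeros u s'"
    by (simp add: vec_eq_iff ins_zeros_def)
  have ins_scale: "\<And>(a::'a) (s::'a^'n). ins_zeros u (a *s s) = (\<chi> j. a *s (ins_zeros u s $ j))"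
    by (simp add: vec_eq_iff ins_zeros_def)
  have ins0: "ins_zeros u (0::'a^'n) = 0"
    by (simp add: vec_eq_iff ins_zeros_def)
  have proj_ins: "\<And>s::'a^'n. (\<chi> j. ins_zeros u s $ j $ u j) = s"
    by (simp add: vec_eq_iff ins_zeros_def)
  have ins_proj: "\<And>x::('a^'m)^'n. (\<forall>j i. i \<noteq> u j \<longrightarrow> x $ j $ i = 0) \<Longrightarrow> ins_zeros u (\<chi> j. x$j$u j) = x"
    by (auto simp add: vec_eq_iff ins_zeros_def)
  have vz_ins: "\<And>s::'a^'n. \<forall>j i. i \<noteq> u j \<longrightarrow> ins_zeros u s $ j $ i = 0"
    by (simp add: ins_zeros_def)
  define Q where "Q s = PhiB_inv emb b (ins_zeros u s)" for s
  have Su_char: "S_u emb b u C = {s. Q s \<in> C}"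
  proof
    show "S_u emb b u C \<subseteq> {s. Q s \<in> C}"
      unfolding S_u_def Short_u_def Im_q_def Q_def by (auto simp: ins_proj QP)
    show "{s. Q s \<in> C} \<subseteq> S_u emb b u C"
    proof
      fix s assume "s \<in> {s. Q s \<in> C}"
      hence "ins_zeros u s \<in> PhiB emb b ` C" unfolding Q_def by (metis PQ image_eqI mem_Collect_eq)
      hence "\<exists>x. s = (\<chi> j. x $ j $ u j) \<and> x \<in> PhiB emb b ` C \<and> (\<forall>j i. i \<noteq> u j \<longrightarrow> x $ j $ i = 0)"
        using vz_ins[of s] proj_ins[of s] by (intro exI[of _ "ins_zeros u s"]) simp
      thus "s \<in> S_u emb b u C"
        unfolding S_u_def Short_u_def Im_q_def by blast
    qed
  qed
  have hamQ: "\<And>w w' :: ('a^'m)^'n. hamming (PhiB_inv emb b w) (PhiB_inv emb b w') = hamming w w'"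
  proof -
    fix w w' :: "('a^'m)^'n"
    have "{j. PhiB_inv emb b w $ j \<noteq> PhiB_inv emb b w' $ j} = {j. w $ j \<noteq> w' $ j}"
    proof (intro Collect_cong iffI)
      fix j assume "PhiB_inv emb b w $ j \<noteq> PhiB_inv emb b w' $ j"
      thus "w $ j \<noteq> w' $ j" by (auto simp: Qj)
    next
      fix j assume "w $ j \<noteq> w' $ j"
      thus "PhiB_inv emb b w $ j \<noteq> PhiB_inv emb b w' $ j" by (metis PQ Pj)
    qed
    thus "hamming (PhiB_inv emb b w) (PhiB_inv emb b w') = hamming w w'"
      by (simp add: hamming_def)
  qed
  have hamI: "\<And>s s' :: 'a^'n. hamming (ins_zeros u s) (ins_zeros u s') = hamming s s'"
  proof -
    fix s s' :: "'a^'n"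
    have "{j. ins_zeros u s $ j \<noteq> ins_zeros u s' $ j} = {j. s $ j \<noteq> s' $ j}"
      by (auto simp: ins_zeros_def vec_eq_iff)
    thus "hamming (ins_zeros u s) (ins_zeros u s') = hamming s s'" by (simp add: hamming_def)
  qed
  have hamQQ: "\<And>s s'. hamming (Q s) (Q s') = hamming s s'"
    unfolding Q_def using hamQ hamI by simp
  have Q_inj: "\<And>s s'. Q s = Q s' \<Longrightarrow> s = s'"
    unfolding Q_def by (metis PQ proj_ins)
  have PQ_proj: "\<And>s. (\<chi> j. PhiB emb b (Q s) $ j $ u j) = s"
    unfolding Q_def PQ by (rule proj_ins)
  have sub: "vec.subspace (S_u emb b u C)"
    unfolding Su_char vec.subspace_def
    by (simp add: Q_def ins_add ins_scale ins0 Q_add Q_scale Q0 vec.subspace_0[OF lin]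
        vec.subspace_add[OF lin] vec.subspace_scale[OF lin])
  have dist: "\<forall>x\<in>S_u emb b u C. \<forall>y\<in>S_u emb b u C. x \<noteq> y \<longrightarrow> hamming x y \<ge> d"
  proof (intro ballI impI)
    fix x y assume x: "x \<in> S_u emb b u C" and y: "y \<in> S_u emb b u C" and ne: "x \<noteq> y"
    have fin: "finite {hamming x y | x y. x \<in> C \<and> y \<in> C \<and> x \<noteq> y}"
      by (rule finite_subset[of _ "(\<lambda>(x,y). hamming x y) ` UNIV"]) auto
    have "hamming (Q x) (Q y) \<in> {hamming x y | x y. x \<in> C \<and> y \<in> C \<and> x \<noteq> y}"
      using x y ne Q_inj unfolding Su_char by blast
    hence "d \<le> hamming (Q x) (Q y)" unfolding distC min_dist_def using fin by simp
    thus "hamming x y \<ge> d" using hamQQ by simp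
  qed
  have dec1: "\<forall>c\<in>S_u emb b u C. \<forall>y::'a^'n. hamming y c \<le> t \<longrightarrow>
          PhiB_inv emb b (ins_zeros u c) \<in> C
        \<and> hamming (PhiB_inv emb b (ins_zeros u y)) (PhiB_inv emb b (ins_zeros u c)) \<le> t
        \<and> (\<chi> j. PhiB emb b (PhiB_inv emb b (ins_zeros u c)) $ j $ u j) = c"
    using Su_char hamQQ PQ_proj unfolding Q_def by auto
  have dec2: "\<forall>dec :: 'b^'n \<Rightarrow> 'b^'n.
          (\<forall>c\<in>C. \<forall>w. hamming w c \<le> t \<longrightarrow> dec w = c) \<longrightarrow>
          (\<forall>c\<in>S_u emb b u C. \<forall>y. hamming y c \<le> t \<longrightarrow>
              (\<chi> j. PhiB emb b (dec (PhiB_inv emb b (ins_zeros u y))) $ j $ u j) = c)"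
  proof (intro allI impI ballI)
    fix dec :: "'b^'n \<Rightarrow> 'b^'n" and c y
    assume D: "\<forall>c\<in>C. \<forall>w. hamming w c \<le> t \<longrightarrow> dec w = c" and c: "c \<in> S_u emb b u C"
      and h: "hamming y c \<le> t"
    have "dec (Q y) = Q c" using D c h hamQQ Su_char by auto
    thus "(\<chi> j. PhiB emb b (dec (PhiB_inv emb b (ins_zeros u y))) $ j $ u j) = c"
      using PQ_proj unfolding Q_def by simp
  qed
  define K where "K = {c \<in> C. \<forall>j i. i \<noteq> u j \<longrightarrow> PhiB emb b c $ j $ i = 0}"
  have "K \<subseteq> Q ` S_u emb b u C"
  proof
    fix c assume c: "c \<in> K"
    define s where "s = (\<chi> j. PhiB emb b c $ j $ u j)"
    have "Q s = c" unfolding Q_def s_def using c ins_proj[of "PhiB emb b c"] QP K_def by simp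
    thus "c \<in> Q ` S_u emb b u C" using c unfolding K_def Su_char by auto
  qed
  hence cardK: "card K \<le> card (S_u emb b u C)"
    by (meson card_image_le card_mono finite dual_order.trans)
  define Z where "Z = {Y::('a^'m)^'n. \<forall>j. Y$j$u j = 0}"
  define g where "g c = (\<chi> j. \<chi> i. if i = u j then 0 else PhiB emb b c $ j $ i)" for c
  have g_diff: "\<And>x y. g (x - y) = g x - g y"
    by (simp add: g_def vec_eq_iff P_diff)
  have g0: "\<And>c. g c = 0 \<longleftrightarrow> (\<forall>j i. i \<noteq> u j \<longrightarrow> PhiB emb b c $ j $ i = 0)"
    by (auto simp: g_def vec_eq_iff)
  have gZ: "\<And>c. g c \<in> Z" by (simp add: g_def Z_def)
  define sec where "sec z = (SOME c'. c' \<in> C \<and> g c' = z)" for z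
  have sec: "\<And>c. c \<in> C \<Longrightarrow> sec (g c) \<in> C \<and> g (sec (g c)) = g c"
    unfolding sec_def by (rule someI_ex) blast
  define phi where "phi c = (c - sec (g c), g c)" for c
  have "inj_on phi C"
  proof (rule inj_onI)
    fix x y assume "x \<in> C" "y \<in> C" "phi x = phi y"
    thus "x = y" unfolding phi_def by auto
  qed
  moreover have "phi ` C \<subseteq> K \<times> Z"
  proof
    fix z assume "z \<in> phi ` C"
    then obtain c where c: "c \<in> C" and z: "z = phi c" by auto
    have "c - sec (g c) \<in> C" using sec[OF c] c vec.subspace_diff[OF lin] by blast
    moreover have "g (c - sec (g c)) = 0" using sec[OF c] g_diff by simp
    ultimately show "z \<in> K \<times> Z" unfolding z phi_def K_def using g0 gZ by auto
  qed
  ultimately have "card C \<le> card (K \<times> Z)" by (intro card_inj_on_le) auto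
  hence cardC_le: "card C \<le> card K * card Z" by (simp add: card_cartesian_product)
  define psi where "psi w = (w - ins_zeros u (\<chi> j. w$j$u j), (\<chi> j. w$j$u j))" for w :: "('a^'m)^'n"
  have "bij_betw psi UNIV (Z \<times> UNIV)"
    unfolding bij_betw_def
  proof
    show "inj psi"
    proof (rule injI)
      fix x y assume h: "psi x = psi y"
      have e1: "x - ins_zeros u (\<chi> j. x$j$u j) = y - ins_zeros u (\<chi> j. y$j$u j)"
        using arg_cong[where f=fst, OF h] unfolding psi_def by (simp only: fst_conv)
      have e2: "(\<chi> j. x$j$u j) = (\<chi> j. y$j$u j)"
        using arg_cong[where f=snd, OF h] unfolding psi_def by (simp only: snd_conv)
      show "x = y" using e1 unfolding e2 by simp
    qed
    show "range psi = Z \<times> UNIV"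
    proof
      show "range psi \<subseteq> Z \<times> UNIV" by (auto simp: psi_def Z_def ins_zeros_def)
      show "Z \<times> UNIV \<subseteq> range psi"
      proof
        fix p assume p: "p \<in> Z \<times> (UNIV :: ('a^'n) set)"
        obtain Y z where pz: "p = (Y, z)" by (cases p)
        have Y: "Y \<in> Z" using p pz by simp
        have e: "(\<chi> j. (Y + ins_zeros u z)$j$u j) = z"
          using Y by (simp add: Z_def vec_eq_iff ins_zeros_def)
        have "psi (Y + ins_zeros u z) = p" unfolding psi_def e pz by simp
        thus "p \<in> range psi" by (metis rangeI)
      qed
    qed
  qed
  hence "CARD(('a^'m)^'n) = card (Z \<times> (UNIV :: ('a^'n) set))" by (rule bij_betw_same_card)
  hence cardZ: "(CARD('a) ^ CARD('m)) ^ CARD('n) = card Z * CARD('a) ^ CARD('n)"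
    by (simp add: card_cartesian_product)
  have "bij (phiB emb b)"
    unfolding bij_def inj_def surj_def using phiB_eq phiB_uniq by metis
  hence "CARD('b) = CARD('a^'m)" by (rule bij_betw_same_card)
  hence cardb: "CARD('b) = CARD('a) ^ CARD('m)" by simp
  have cardC: "card C = (CARD('a) ^ CARD('m)) ^ k"
    using card_subspace_vec[OF lin] dimC cardb by simp
  have cardS: "card (S_u emb b u C) = CARD('a) ^ vec.dim (S_u emb b u C)"
    using card_subspace_vec[OF sub] .
  have q2: "1 < CARD('a)"
  proof -
    have "card {0::'a, 1} \<le> CARD('a)" by (rule card_mono) auto
    thus ?thesis by simp
  qed
  define q where "q = CARD('a)"
  define dS where "dS = vec.dim (S_u emb b u C)"
  have "q ^ (CARD('m) * k + CARD('n)) = (q ^ CARD('m)) ^ k * q ^ CARD('n)"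
    by (simp add: power_add power_mult)
  also have "\<dots> \<le> q ^ dS * card Z * q ^ CARD('n)"
  proof -
    have "card C \<le> card (S_u emb b u C) * card Z"
      using cardC_le cardK mult_le_mono1 order_trans by blast
    hence "(q ^ CARD('m)) ^ k \<le> q ^ dS * card Z"
      using cardC cardS unfolding q_def dS_def by simp
    thus ?thesis by (rule mult_le_mono1)
  qed
  also have "\<dots> = q ^ dS * (q ^ CARD('m)) ^ CARD('n)"
    using cardZ unfolding q_def by (simp only: mult.assoc)
  also have "\<dots> = q ^ (dS + CARD('m) * CARD('n))"
    by (simp add: power_add power_mult)
  finally have qq: "q ^ (CARD('m) * k + CARD('n)) \<le> q ^ (dS + CARD('m) * CARD('n))" .
  have "CARD('m) * k + CARD('n) \<le> dS + CARD('m) * CARD('n)"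
    using power_le_imp_le_exp[OF _ qq] q2 unfolding q_def by blast
  hence "int CARD('m) * int k + int CARD('n) \<le> int dS + int CARD('m) * int CARD('n)"
    by (metis of_nat_add of_nat_mult of_nat_le_iff)
  hence dimS: "int (vec.dim (S_u emb b u C)) \<ge> int CARD('n) - int CARD('m) * (int CARD('n) - int k)"
    unfolding dS_def by (simp add: right_diff_distrib)
  show ?thesis using sub dimS dist dec1 dec2 by blast
qed

end
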